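(* Let $\mathbf{P}=(X,P)$ be a dually-CPT poset and let $M$ be a strong clique module of $\mathbf{P}$ such that the subposet induced by $M$ is CI. If an element $z\in M$ is represented by a trivial path in a CPT representation $\{W_x\}_{x\in X}$ of $\mathbf{P}$, then there exists a CPT representation $\{W'_x\}_{x\in X}$ of $\mathbf{P}$ in which $z$ is represented by a non-trivial path.
   Context: A poset is CPT if there is a tree $T$ and paths $W_x$ of $T$ with $x<y$ iff $W_x\subsetneq W_y$ (a CPT representation); CI if this can be done with $T$ a path. $\mathbf{P}$ is dually-CPT if both $\mathbf{P}$ and its dual are CPT. A module is a set $M\subseteq X$ such that each $y\notin M$ is comparable to all or to none of the elements of $M$; it is strong if for every module $M'$, $M\cap M'=\emptyset$, $M\subseteq M'$ or $M'\subseteq M$. A strong module $M$ is a clique module if the complement of the comparability graph induced on $M$ is disconnected. A trivial path consists of a single vertex. *)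

theory Defs
  imports Main
begin

definition finite_poset :: "'a set \<Rightarrow> ('a \<Rightarrow> 'a \<Rightarrow> bool) \<Rightarrow> bool" where
  "finite_poset X lt \<longleftrightarrow> finite X \<and> (\<forall>x\<in>X. \<not> lt x x) \<and>
     (\<forall>x\<in>X. \<forall>y\<in>X. \<forall>z\<in>X. lt x y \<longrightarrow> lt y z \<longrightarrow> lt x z)"

definition walk :: "'v set set \<Rightarrow> 'v list \<Rightarrow> bool" where
  "walk E vs \<longleftrightarrow> vs \<noteq> [] \<and> (\<forall>i. Suc i < length vs \<longrightarrow> {vs ! i, vs ! Suc i} \<in> E)"

definition simple_graph :: "'v set \<Rightarrow> 'v set set \<Rightarrow> bool" where
  "simple_graph V E \<longleftrightarrow> (\<forall>e\<in>E. \<exists>u v. u \<in> V \<and> v \<in> V \<and> u \<noteq> v \<and> e = {u, v})"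

definition connected_graph :: "'v set \<Rightarrow> 'v set set \<Rightarrow> bool" where
  "connected_graph V E \<longleftrightarrow> (\<forall>u\<in>V. \<forall>v\<in>V. \<exists>vs. walk E vs \<and> set vs \<subseteq> V \<and> hd vs = u \<and> last vs = v)"

definition tree :: "'v set \<Rightarrow> 'v set set \<Rightarrow> bool" where
  "tree V E \<longleftrightarrow> finite V \<and> V \<noteq> {} \<and> simple_graph V E \<and> connected_graph V E \<and>
     card E = card V - 1"

definition is_path :: "'v set \<Rightarrow> 'v set set \<Rightarrow> 'v set \<Rightarrow> bool" where
  "is_path V E S \<longleftrightarrow> (\<exists>vs. walk E vs \<and> distinct vs \<and> set vs \<subseteq> V \<and> S = set vs)"

definition trivial_path :: "'v set \<Rightarrow> bool" where
  "trivial_path S \<longleftrightarrow> (\<exists>v. S = {v})"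

definition cpt_rep :: "'a set \<Rightarrow> ('a \<Rightarrow> 'a \<Rightarrow> bool) \<Rightarrow> 'v set \<Rightarrow> 'v set set \<Rightarrow> ('a \<Rightarrow> 'v set) \<Rightarrow> bool" where
  "cpt_rep X lt V E W \<longleftrightarrow> tree V E \<and> (\<forall>x\<in>X. is_path V E (W x)) \<and>
     (\<forall>x\<in>X. \<forall>y\<in>X. lt x y \<longleftrightarrow> W x \<subset> W y)"

(* Trees are finite, so vertices may be taken to be natural numbers w.l.o.g. *)
definition CPT :: "'a set \<Rightarrow> ('a \<Rightarrow> 'a \<Rightarrow> bool) \<Rightarrow> bool" where
  "CPT X lt \<longleftrightarrow> (\<exists>(V::nat set) E W. cpt_rep X lt V E W)"

definition CI :: "'a set \<Rightarrow> ('a \<Rightarrow> 'a \<Rightarrow> bool) \<Rightarrow> bool" where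
  "CI X lt \<longleftrightarrow> (\<exists>(V::nat set) E W. cpt_rep X lt V E W \<and> is_path V E V)"

definition dually_CPT :: "'a set \<Rightarrow> ('a \<Rightarrow> 'a \<Rightarrow> bool) \<Rightarrow> bool" where
  "dually_CPT X lt \<longleftrightarrow> CPT X lt \<and> CPT X (\<lambda>x y. lt y x)"

definition comparable :: "('a \<Rightarrow> 'a \<Rightarrow> bool) \<Rightarrow> 'a \<Rightarrow> 'a \<Rightarrow> bool" where
  "comparable lt x y \<longleftrightarrow> lt x y \<or> lt y x"

definition module :: "'a set \<Rightarrow> ('a \<Rightarrow> 'a \<Rightarrow> bool) \<Rightarrow> 'a set \<Rightarrow> bool" where
  "module X lt M \<longleftrightarrow> M \<subseteq> X \<and>
     (\<forall>y\<in>X - M. (\<forall>m\<in>M. comparable lt y m) \<or> (\<forall>m\<in>M. \<not> comparable lt y m))"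

definition strong_module :: "'a set \<Rightarrow> ('a \<Rightarrow> 'a \<Rightarrow> bool) \<Rightarrow> 'a set \<Rightarrow> bool" where
  "strong_module X lt M \<longleftrightarrow> module X lt M \<and>
     (\<forall>M'. module X lt M' \<longrightarrow> M \<inter> M' = {} \<or> M \<subseteq> M' \<or> M' \<subseteq> M)"

(* The complement of the comparability graph on M is disconnected: M splits into two
   nonempty parts with every element of one part comparable to every element of the other. *)
definition clique_module :: "'a set \<Rightarrow> ('a \<Rightarrow> 'a \<Rightarrow> bool) \<Rightarrow> 'a set \<Rightarrow> bool" where
  "clique_module X lt M \<longleftrightarrow> strong_module X lt M \<and>
     (\<exists>A B. A \<noteq> {} \<and> B \<noteq> {} \<and> A \<union> B = M \<and> A \<inter> B = {} \<and>
        (\<forall>a\<in>A. \<forall>b\<in>B. comparable lt a b))"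

end

theory Submission
  imports Defs
begin

lemma walk_single[simp]: "walk E [x]"
  by (simp add: walk_def)

lemma walk_Nil[simp]: "\<not> walk E []"
  by (simp add: walk_def)

lemma walk_Cons_Cons: "walk E (x # y # xs) \<longleftrightarrow> {x, y} \<in> E \<and> walk E (y # xs)"
proof
  assume "walk E (x # y # xs)"
  then show "{x, y} \<in> E \<and> walk E (y # xs)"
    unfolding walk_def by (metis Suc_less_eq length_Cons list.distinct(1) nth_Cons_0 nth_Cons_Suc zero_less_Suc)
next
  assume a: "{x, y} \<in> E \<and> walk E (y # xs)"
  show "walk E (x # y # xs)"
    unfolding walk_def
  proof (intro conjI allI impI)
    fix i assume "Suc i < length (x # y # xs)"
    then show "{(x # y # xs) ! i, (x # y # xs) ! Suc i} \<in> E"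
      using a unfolding walk_def by (cases i) auto
  qed simp
qed

lemma walk_Cons: "ys \<noteq> [] \<Longrightarrow> walk E (x # ys) \<longleftrightarrow> {x, hd ys} \<in> E \<and> walk E ys"
  by (cases ys) (auto simp: walk_Cons_Cons)

lemma walk_append: "xs \<noteq> [] \<Longrightarrow> ys \<noteq> [] \<Longrightarrow>
   walk E (xs @ ys) \<longleftrightarrow> walk E xs \<and> walk E ys \<and> {last xs, hd ys} \<in> E"
proof (induction xs)
  case Nil then show ?case by simp
next
  case (Cons x xs)
  show ?case
  proof (cases xs)
    case Nil
    then show ?thesis using Cons.prems by (auto simp: walk_Cons)
  next
    case (Cons y zs)
    then show ?thesis using Cons.IH Cons.prems by (simp add: walk_Cons_Cons)
  qed
qed

lemma walk_glue: assumes a: "walk E xs" "walk E ys" "last xs = hd ys" shows "walk E (xs @ tl ys)"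
proof (cases "tl ys = []")
  case True then show ?thesis
    using a by simp
next
  case False
  then have ys: "ys = hd ys # tl ys" by (cases ys) auto
  with a False have "{hd ys, hd (tl ys)} \<in> E" "walk E (tl ys)"
    by (metis walk_Cons)+
  then show ?thesis using a False by (subst walk_append) auto
qed

lemma walk_rev: "walk E xs \<Longrightarrow> walk E (rev xs)"
proof (induction xs)
  case Nil then show ?case by simp
next
  case (Cons x xs)
  show ?case
  proof (cases xs)
    case Nil then show ?thesis by simp
  next
    case (Cons y zs)
    with Cons.prems have "{x,y} \<in> E" "walk E xs" by (auto simp: walk_Cons_Cons)
    then show ?thesis using Cons Cons.IH
      by (subst rev.simps, subst walk_append) (auto simp: insert_commute)
  qed
qed

lemma walk_mono: "walk E xs \<Longrightarrow> E \<subseteq> E' \<Longrightarrow> walk E' xs"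
  unfolding walk_def by blast

lemma walk_avoid: "walk E xs \<Longrightarrow> \<not> {v, w} \<subseteq> set xs \<Longrightarrow> walk (E - {{v, w}}) xs"
  unfolding walk_def
  by (metis (no_types, lifting) Diff_iff Suc_lessD empty_subsetI insert_subset nth_mem singletonD)

lemma walk_edge: "walk E xs \<Longrightarrow> Suc i < length xs \<Longrightarrow> {xs ! i, xs ! Suc i} \<in> E"
  unfolding walk_def by blast

lemma walk_take: "walk E xs \<Longrightarrow> n > 0 \<Longrightarrow> walk E (take n xs)"
  unfolding walk_def by auto

lemma walk_drop: "walk E xs \<Longrightarrow> n < length xs \<Longrightarrow> walk E (drop n xs)"
  unfolding walk_def by auto


definition adj :: "'v set set \<Rightarrow> 'v \<Rightarrow> 'v \<Rightarrow> bool" where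
  "adj E x y \<longleftrightarrow> {x, y} \<in> E"

lemma adj_sym: "adj E x y \<Longrightarrow> adj E y x"
  by (simp add: adj_def insert_commute)

lemma rtc_sym: "(adj E)\<^sup>*\<^sup>* x y \<Longrightarrow> (adj E)\<^sup>*\<^sup>* y x"
  by (induction rule: rtranclp_induct)
     (auto intro: converse_rtranclp_into_rtranclp adj_sym)

lemma walk_rtc: "walk E vs \<Longrightarrow> (adj E)\<^sup>*\<^sup>* (hd vs) (last vs)"
proof (induction vs)
  case Nil then show ?case by (simp add: walk_def)
next
  case (Cons x xs)
  show ?case
  proof (cases xs)
    case Nil then show ?thesis by simp
  next
    case (Cons y ys)
    with Cons.prems have "{x,y} \<in> E" "walk E xs" by (auto simp: walk_Cons_Cons)
    then have "(adj E)\<^sup>*\<^sup>* y (last xs)" using Cons.IH Cons by simp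
    moreover have "adj E x y" using \<open>{x,y} \<in> E\<close> by (simp add: adj_def)
    ultimately show ?thesis using Cons by (simp add: converse_rtranclp_into_rtranclp)
  qed
qed

lemma simple_edge: assumes "simple_graph V E" "{x, y} \<in> E" shows "x \<in> V \<and> y \<in> V \<and> x \<noteq> y"
proof -
  obtain u v where uv: "u \<in> V" "v \<in> V" "u \<noteq> v" "{x,y} = {u,v}"
    using assms unfolding simple_graph_def by blast
  then show ?thesis by (auto simp: doubleton_eq_iff)
qed

lemma rtc_walk:
  assumes "(adj E)\<^sup>*\<^sup>* a b" "a \<in> V" "simple_graph V E"
  shows "\<exists>vs. walk E vs \<and> set vs \<subseteq> V \<and> hd vs = a \<and> last vs = b"
  using assms(1)
proof (induction rule: rtranclp_induct)
  case base
  then show ?case using assms by (intro exI[of _ "[a]"]) auto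
next
  case (step y z)
  then obtain vs where vs: "walk E vs" "set vs \<subseteq> V" "hd vs = a" "last vs = y" by blast
  have e: "{y, z} \<in> E" using step by (simp add: adj_def)
  then have "z \<in> V" using simple_edge[OF assms(3)] by blast
  moreover have "vs \<noteq> []" using vs by (simp add: walk_def)
  ultimately have "walk E (vs @ [z])" using vs e by (subst walk_append) auto
  moreover have "set (vs @ [z]) \<subseteq> V" using vs \<open>z \<in> V\<close> by simp
  moreover have "hd (vs @ [z]) = a" using vs \<open>vs \<noteq> []\<close> by simp
  ultimately show ?case by (intro exI[of _ "vs @ [z]"]) simp
qed

lemma connected_iff_rtc:
  assumes "simple_graph V E"
  shows "connected_graph V E \<longleftrightarrow> (\<forall>u\<in>V. \<forall>v\<in>V. (adj E)\<^sup>*\<^sup>* u v)"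
proof
  assume c: "connected_graph V E"
  show "\<forall>u\<in>V. \<forall>v\<in>V. (adj E)\<^sup>*\<^sup>* u v"
  proof (intro ballI)
    fix u v assume "u \<in> V" "v \<in> V"
    then obtain vs where "walk E vs" "hd vs = u" "last vs = v"
      using c unfolding connected_graph_def by blast
    then show "(adj E)\<^sup>*\<^sup>* u v" using walk_rtc by blast
  qed
next
  assume r: "\<forall>u\<in>V. \<forall>v\<in>V. (adj E)\<^sup>*\<^sup>* u v"
  show "connected_graph V E" unfolding connected_graph_def
  proof (intro ballI)
    fix u v assume "u \<in> V" "v \<in> V"
    then show "\<exists>vs. walk E vs \<and> set vs \<subseteq> V \<and> hd vs = u \<and> last vs = v"
      using r rtc_walk[OF _ _ assms, of u v] by simp
  qed
qed


lemma simple_finite_E: "simple_graph V E \<Longrightarrow> finite V \<Longrightarrow> finite E"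
proof -
  assume a: "simple_graph V E" "finite V"
  have "E \<subseteq> Pow V"
  proof
    fix e assume "e \<in> E"
    then obtain u v where "u \<in> V" "v \<in> V" "e = {u, v}" using a(1) unfolding simple_graph_def by blast
    then show "e \<in> Pow V" by simp
  qed
  then show ?thesis using a(2) finite_subset by blast
qed

lemma conn_card:
  assumes fin: "finite V" and sg: "simple_graph V E" and cg: "connected_graph V E" and r: "r \<in> V"
  shows "card V \<le> Suc (card E)"
proof -
  define P where "P x n \<longleftrightarrow> (\<exists>vs. walk E vs \<and> set vs \<subseteq> V \<and> hd vs = r \<and> last vs = x \<and> length vs = n)" for x n
  define d where "d x = (LEAST n. P x n)" for x
  have ex: "\<exists>n. P x n" if "x \<in> V" for x
    using cg r that unfolding connected_graph_def P_def by blast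
  have dP: "P x (d x)" if "x \<in> V" for x
    unfolding d_def using ex[OF that] by (rule LeastI_ex)
  have dle: "d x \<le> n" if "P x n" for x n
    unfolding d_def using that by (rule Least_le)
  have pex: "\<exists>p. p \<in> V \<and> {p, x} \<in> E \<and> d p < d x" if x: "x \<in> V" "x \<noteq> r" for x
  proof -
    obtain vs where vs: "walk E vs" "set vs \<subseteq> V" "hd vs = r" "last vs = x" "length vs = d x"
      using dP[OF x(1)] unfolding P_def by blast
    have ne: "vs \<noteq> []" using vs by auto
    have len2: "length vs \<ge> 2"
    proof (rule ccontr)
      assume "\<not> length vs \<ge> 2"
      then have "length vs = 1" using ne by (cases vs) (auto simp: not_less_eq_eq)
      then have "hd vs = last vs" by (cases vs) auto
      then show False using vs x by simp
    qed
    define p where "p = vs ! (length vs - 2)"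
    have lastx: "vs ! (length vs - 1) = x" using vs ne by (simp add: last_conv_nth)
    have e: "{p, x} \<in> E"
      using walk_edge[OF vs(1), of "length vs - 2"] len2 lastx unfolding p_def
      by (simp add: Suc_diff_Suc numeral_2_eq_2)
    have pV: "p \<in> V" unfolding p_def using len2 by (intro subsetD[OF vs(2)] nth_mem) simp
    define ws where "ws = take (length vs - 1) vs"
    have lws: "length ws = length vs - 1" unfolding ws_def by simp
    have "walk E ws" unfolding ws_def using vs(1) len2 by (intro walk_take) auto
    moreover have "set ws \<subseteq> V" unfolding ws_def using vs(2) set_take_subset by fastforce
    moreover have "hd ws = r" unfolding ws_def using vs(3) len2 by simp
    moreover have "last ws = p"
    proof -
      have "ws \<noteq> []" using lws len2 by auto
      then have "last ws = ws ! (length ws - 1)" by (simp add: last_conv_nth)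
      also have "\<dots> = vs ! (length vs - 2)" unfolding ws_def using len2 by (simp add: numeral_2_eq_2)
      finally show ?thesis unfolding p_def .
    qed
    moreover have "length ws = d x - 1" using lws vs(5) by simp
    ultimately have "P p (d x - 1)" unfolding P_def by blast
    then have "d p < d x" using dle len2 vs(5) by fastforce
    then show ?thesis using pV e by blast
  qed
  define p where "p x = (SOME p. p \<in> V \<and> {p, x} \<in> E \<and> d p < d x)" for x
  have pp: "p x \<in> V \<and> {p x, x} \<in> E \<and> d (p x) < d x" if "x \<in> V" "x \<noteq> r" for x
    unfolding p_def using someI_ex[OF pex[OF that]] .
  have inj: "inj_on (\<lambda>x. {x, p x}) (V - {r})"
  proof (rule inj_onI)
    fix x y assume xy: "x \<in> V - {r}" "y \<in> V - {r}" "{x, p x} = {y, p y}"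
    show "x = y"
    proof (rule ccontr)
      assume "x \<noteq> y"
      then have "x = p y" "y = p x" using xy(3) by (auto simp: doubleton_eq_iff)
      then show False using pp[of x] pp[of y] xy by auto
    qed
  qed
  have img: "(\<lambda>x. {x, p x}) ` (V - {r}) \<subseteq> E" using pp by (auto simp: insert_commute)
  have "card (V - {r}) \<le> card E"
    using card_inj_on_le[OF inj img simple_finite_E[OF sg fin]] .
  then show ?thesis using r fin by (simp add: card_Diff_singleton)
qed


lemma simple_graph_mono: "simple_graph V E \<Longrightarrow> E' \<subseteq> E \<Longrightarrow> simple_graph V E'"
  unfolding simple_graph_def by blast

lemma rtc_mono_gen:
  assumes "\<And>x y. adj E x y \<Longrightarrow> (adj E')\<^sup>*\<^sup>* x y"
  shows "(adj E)\<^sup>*\<^sup>* x y \<Longrightarrow> (adj E')\<^sup>*\<^sup>* x y"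
proof (induction rule: rtranclp_induct)
  case base then show ?case by simp
next
  case (step y z)
  then show ?case using assms[of y z] by (meson rtranclp_trans)
qed

lemma tree_edge_adjacent:
  assumes T: "tree V E" and e: "{v, w} \<in> E" and vs: "walk E vs" "distinct vs"
    and ij: "vs ! i = v" "vs ! j = w" "i < j" "j < length vs"
  shows "j = Suc i"
proof (rule ccontr)
  assume nj: "j \<noteq> Suc i"
  define E' where "E' = E - {{v, w}}"
  have fin: "finite V" and sg: "simple_graph V E" and cg: "connected_graph V E"
    and cE: "card E = card V - 1"
    using T unfolding tree_def by auto
  have vw: "v \<in> V" "w \<in> V" "v \<noteq> w" using simple_edge[OF sg e] by auto
  have seg: "(adj E')\<^sup>*\<^sup>* v (vs ! k)" if "i \<le> k" "k \<le> j" for k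
    using that
  proof (induction k rule: dec_induct)
    case base then show ?case using ij by simp
  next
    case (step n)
    have sn: "Suc n < length vs" using step ij by simp
    have ed: "{vs ! n, vs ! Suc n} \<in> E" using walk_edge[OF vs(1) sn] .
    have ne: "{vs ! n, vs ! Suc n} \<noteq> {v, w}"
    proof
      assume "{vs ! n, vs ! Suc n} = {v, w}"
      then have "(vs ! n = vs ! i \<and> vs ! Suc n = vs ! j) \<or> (vs ! n = vs ! j \<and> vs ! Suc n = vs ! i)"
        using ij by (auto simp: doubleton_eq_iff)
      then have "(n = i \<and> Suc n = j) \<or> (n = j \<and> Suc n = i)"
        using vs(2) sn ij by (auto simp: nth_eq_iff_index_eq)
      then show False using nj step by auto
    qed
    have "adj E' (vs ! n) (vs ! Suc n)" using ed ne unfolding adj_def E'_def by blast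
    moreover have "(adj E')\<^sup>*\<^sup>* v (vs ! n)" using step by simp
    ultimately show ?case by (meson rtranclp.rtrancl_into_rtrancl)
  qed
  have vw': "(adj E')\<^sup>*\<^sup>* v w" using seg[of j] ij by simp
  have sub: "(adj E')\<^sup>*\<^sup>* x y" if "adj E x y" for x y
  proof (cases "{x, y} = {v, w}")
    case True
    then have "(x = v \<and> y = w) \<or> (x = w \<and> y = v)" by (auto simp: doubleton_eq_iff)
    moreover have "(adj E')\<^sup>*\<^sup>* w v" using rtc_sym[OF vw'] .
    ultimately show ?thesis using vw' by auto
  next
    case False
    then have "adj E' x y" using that unfolding adj_def E'_def by blast
    then show ?thesis by simp
  qed
  have sg': "simple_graph V E'" using simple_graph_mono[OF sg] unfolding E'_def by blast
  have "\<forall>x\<in>V. \<forall>y\<in>V. (adj E)\<^sup>*\<^sup>* x y" using cg connected_iff_rtc[OF sg] by simp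
  then have "\<forall>x\<in>V. \<forall>y\<in>V. (adj E')\<^sup>*\<^sup>* x y" using rtc_mono_gen[OF sub] by simp
  then have "connected_graph V E'" using connected_iff_rtc[OF sg'] by simp
  then have "card V \<le> Suc (card E')" using conn_card[OF fin sg' _ vw(1)] by blast
  moreover have "card E' = card E - 1"
    unfolding E'_def using e simple_finite_E[OF sg fin] by simp
  moreover have "card V \<ge> 2"
  proof -
    have "card {v, w} \<le> card V" using vw fin by (intro card_mono) auto
    then show ?thesis using vw by simp
  qed
  ultimately show False using cE by simp
qed

lemma tree_edge_in_path:
  assumes T: "tree V E" and e: "{v, w} \<in> E" and vs: "walk E vs" "distinct vs"
    and vw: "v \<in> set vs" "w \<in> set vs"
  shows "\<exists>i. Suc i < length vs \<and> ((vs ! i = v \<and> vs ! Suc i = w) \<or> (vs ! i = w \<and> vs ! Suc i = v))"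
proof -
  obtain a b where ab: "a < length vs" "vs ! a = v" "b < length vs" "vs ! b = w"
    using vw by (auto simp: in_set_conv_nth)
  have "simple_graph V E" using T unfolding tree_def by simp
  then have "v \<noteq> w" using simple_edge[of V E v w] e by simp
  then have "a \<noteq> b" using ab by auto
  then show ?thesis
  proof (cases "a < b")
    case True
    then have "b = Suc a" using tree_edge_adjacent[OF T e vs ab(2) ab(4)] ab by blast
    then show ?thesis using ab by blast
  next
    case False
    then have "b < a" using \<open>a \<noteq> b\<close> by simp
    have e': "{w, v} \<in> E" using e by (simp add: insert_commute)
    have "a = Suc b" using tree_edge_adjacent[OF T e' vs ab(4) ab(2) \<open>b < a\<close>] ab by blast
    then show ?thesis using ab by blast
  qed
qed


section \<open>Subdivision of an edge\<close>

definition chain :: "nat \<Rightarrow> nat \<Rightarrow> nat \<Rightarrow> nat \<Rightarrow> nat list" where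
  "chain v w N0 K = v # [N0..<N0+K] @ [w]"

definition chain_edges :: "'v list \<Rightarrow> 'v set set" where
  "chain_edges c = (\<lambda>i. {c ! i, c ! Suc i}) ` {..<length c - 1}"

definition subE :: "nat set set \<Rightarrow> nat \<Rightarrow> nat \<Rightarrow> nat \<Rightarrow> nat \<Rightarrow> nat set set" where
  "subE E v w N0 K = (E - {{v, w}}) \<union> chain_edges (chain v w N0 K)"

lemma chain_len: "length (chain v w N0 K) = K + 2"
  by (simp add: chain_def)

lemma chain_set: "set (chain v w N0 K) = {v, w} \<union> {N0..<N0+K}"
  by (auto simp: chain_def)

lemma chain_distinct: "v < N0 \<Longrightarrow> w < N0 \<Longrightarrow> v \<noteq> w \<Longrightarrow> distinct (chain v w N0 K)"
  by (auto simp: chain_def)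

lemma walk_chain_edges: "c \<noteq> [] \<Longrightarrow> walk (chain_edges c) c"
  unfolding walk_def chain_edges_def by auto

lemma chain_nth_Q: "Suc i < K + 2 \<Longrightarrow> K \<ge> 1 \<Longrightarrow>
    chain v w N0 K ! i \<in> {N0..<N0+K} \<or> chain v w N0 K ! Suc i \<in> {N0..<N0+K}"
proof (cases i)
  case 0
  assume "K \<ge> 1"
  then show ?thesis using 0 by (simp add: chain_def nth_append)
next
  case (Suc j)
  assume "Suc i < K + 2"
  then have "j < K" using Suc by simp
  then show ?thesis using Suc by (simp add: chain_def nth_append)
qed

lemma card_chain_edges: "distinct c \<Longrightarrow> card (chain_edges c) = length c - 1"
proof -
  assume d: "distinct c"
  have "inj_on (\<lambda>i. {c ! i, c ! Suc i}) {..<length c - 1}"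
  proof (rule inj_onI)
    fix i j assume ij: "i \<in> {..<length c - 1}" "j \<in> {..<length c - 1}" "{c ! i, c ! Suc i} = {c ! j, c ! Suc j}"
    then have "(c ! i = c ! j \<and> c ! Suc i = c ! Suc j) \<or> (c ! i = c ! Suc j \<and> c ! Suc i = c ! j)"
      by (auto simp: doubleton_eq_iff)
    then have "(i = j \<and> Suc i = Suc j) \<or> (i = Suc j \<and> Suc i = j)"
      using ij(1,2) d by (auto simp: nth_eq_iff_index_eq)
    then show "i = j" by auto
  qed
  then show ?thesis unfolding chain_edges_def by (simp add: card_image)
qed

locale subdiv =
  fixes V :: "nat set" and E :: "nat set set" and v w N0 K :: nat
  assumes T: "tree V E" and e: "{v, w} \<in> E" and N0: "\<And>x. x \<in> V \<Longrightarrow> x < N0" and K: "K \<ge> 1"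
begin

abbreviation "Q \<equiv> {N0..<N0+K}"
abbreviation "c \<equiv> chain v w N0 K"
abbreviation "V' \<equiv> V \<union> Q"
abbreviation "E' \<equiv> subE E v w N0 K"

lemma fin: "finite V" and sg: "simple_graph V E" and cg: "connected_graph V E"
    and cE: "card E = card V - 1"
  using T unfolding tree_def by auto

lemma vw: "v \<in> V" "w \<in> V" "v \<noteq> w" using simple_edge[OF sg e] by auto

lemma vwN: "v < N0" "w < N0" using N0 vw by auto

lemma c_dist: "distinct c" using chain_distinct vwN vw by blast

lemma QV: "Q \<inter> V = {}" using N0 by fastforce

lemma cE_disj: "chain_edges c \<inter> E = {}"
proof -
  have "x \<notin> E" if xc: "x \<in> chain_edges c" for x
  proof
    assume xE: "x \<in> E"
    obtain i where i: "i < length c - 1" "x = {c ! i, c ! Suc i}"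
      using xc unfolding chain_edges_def by blast
    have "Suc i < K + 2" using i chain_len[of v w N0 K] by simp
    then have "c ! i \<in> Q \<or> c ! Suc i \<in> Q" using chain_nth_Q K by blast
    moreover have "c ! i \<in> V" "c ! Suc i \<in> V" using simple_edge[OF sg] xE i by auto
    ultimately show False using QV by blast
  qed
  then show ?thesis by blast
qed

lemma sg': "simple_graph V' E'"
  unfolding simple_graph_def
proof
  fix x assume "x \<in> E'"
  then consider "x \<in> E" | "x \<in> chain_edges c" unfolding subE_def by blast
  then show "\<exists>a b. a \<in> V' \<and> b \<in> V' \<and> a \<noteq> b \<and> x = {a, b}"
  proof cases
    case 1
    then obtain a b where "a \<in> V" "b \<in> V" "a \<noteq> b" "x = {a, b}" using sg unfolding simple_graph_def by blast
    then show ?thesis by blast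
  next
    case 2
    then obtain i where i: "i < length c - 1" "x = {c ! i, c ! Suc i}"
      unfolding chain_edges_def by blast
    have "c ! i \<in> set c" "c ! Suc i \<in> set c" using i by auto
    then have "c ! i \<in> V'" "c ! Suc i \<in> V'" using chain_set[of v w N0 K] vw by auto
    moreover have "c ! i \<noteq> c ! Suc i" using c_dist i by (simp add: nth_eq_iff_index_eq)
    ultimately show ?thesis using i by blast
  qed
qed

lemma card_E': "card E' = card V' - 1"
proof -
  have finE: "finite E" using simple_finite_E[OF sg fin] .
  have "card (E - {{v, w}}) = card E - 1" using e finE by simp
  moreover have "card (chain_edges c) = K + 1" using card_chain_edges[OF c_dist] chain_len[of v w N0 K] by simp
  moreover have "card E' = card (E - {{v, w}}) + card (chain_edges c)"
    unfolding subE_def using cE_disj finE by (subst card_Un_disjoint) (auto simp: chain_edges_def)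
  moreover have "card V' = card V + K" using QV fin by (subst card_Un_disjoint) auto
  moreover have "card V \<ge> 2"
  proof -
    have "card {v, w} \<le> card V" using vw fin by (intro card_mono) auto
    then show ?thesis using vw by simp
  qed
  ultimately show ?thesis using cE by simp
qed

lemma chain_reach: "k < length c \<Longrightarrow> (adj E')\<^sup>*\<^sup>* v (c ! k)"
proof (induction k)
  case 0 then show ?case by (simp add: chain_def)
next
  case (Suc k)
  have "{c ! k, c ! Suc k} \<in> E'" using Suc.prems unfolding subE_def chain_edges_def by auto
  then have "adj E' (c ! k) (c ! Suc k)" by (simp add: adj_def)
  moreover have "(adj E')\<^sup>*\<^sup>* v (c ! k)" using Suc by simp
  ultimately show ?case by (meson rtranclp.rtrancl_into_rtrancl)
qed

lemma vw_reach: "(adj E')\<^sup>*\<^sup>* v w"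
proof -
  have "c ! (K + 1) = w" by (simp add: chain_def nth_append)
  then show ?thesis using chain_reach[of "K+1"] chain_len[of v w N0 K] by simp
qed

lemma E_sub: "adj E x y \<Longrightarrow> (adj E')\<^sup>*\<^sup>* x y"
proof (cases "{x, y} = {v, w}")
  case True
  then have "(x = v \<and> y = w) \<or> (x = w \<and> y = v)" by (auto simp: doubleton_eq_iff)
  moreover have "(adj E')\<^sup>*\<^sup>* w v" using rtc_sym[OF vw_reach] .
  ultimately show ?thesis using vw_reach by auto
next
  case False
  assume "adj E x y"
  then have "adj E' x y" using False unfolding adj_def subE_def by blast
  then show ?thesis by simp
qed

lemma cg': "connected_graph V' E'"
proof -
  have r1: "(adj E')\<^sup>*\<^sup>* v x" if "x \<in> V" for x
  proof -
    have "(adj E)\<^sup>*\<^sup>* v x" using cg connected_iff_rtc[OF sg] that vw by simp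
    then show ?thesis using rtc_mono_gen[OF E_sub] by simp
  qed
  have r2: "(adj E')\<^sup>*\<^sup>* v x" if "x \<in> Q" for x
  proof -
    have "x \<in> set c" using that chain_set[of v w N0 K] by simp
    then obtain k where "k < length c" "c ! k = x" by (auto simp: in_set_conv_nth)
    then show ?thesis using chain_reach by blast
  qed
  have "(adj E')\<^sup>*\<^sup>* v x" if "x \<in> V'" for x using r1 r2 that by blast
  then have "(adj E')\<^sup>*\<^sup>* x y" if "x \<in> V'" "y \<in> V'" for x y
    using that rtc_sym by (meson rtranclp_trans)
  then show ?thesis using connected_iff_rtc[OF sg'] by blast
qed

lemma tree': "tree V' E'"
  unfolding tree_def using fin sg' cg' card_E' vw by auto


lemma walk_E_E': "walk E xs \<Longrightarrow> \<not> {v, w} \<subseteq> set xs \<Longrightarrow> walk E' xs"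
  using walk_avoid walk_mono unfolding subE_def by (metis Un_upper1)

lemma path_out: "is_path V E S \<Longrightarrow> \<not> {v, w} \<subseteq> S \<Longrightarrow> is_path V' E' S"
  unfolding is_path_def using walk_E_E' by blast

lemma walk_c: "walk E' c"
  using walk_chain_edges[of c] walk_mono unfolding subE_def by (metis Un_upper2 list.distinct(1) chain_def)

lemma path_in_aux:
  assumes vs: "walk E vs" "distinct vs" "set vs \<subseteq> V" and i: "Suc i < length vs" "vs ! i = v" "vs ! Suc i = w"
  shows "is_path V' E' (set vs \<union> Q)"
proof -
  define xs where "xs = take (Suc i) vs"
  define ys where "ys = drop (Suc i) vs"
  have vsxy: "vs = xs @ ys" unfolding xs_def ys_def by simp
  have "ys = w # drop (Suc (Suc i)) vs" unfolding ys_def using i Cons_nth_drop_Suc[of "Suc i" vs] by simp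
  then have ys: "ys = w # tl ys" by simp
  have lx: "last xs = v" unfolding xs_def using i by (simp add: take_Suc_conv_app_nth)
  have dxy: "distinct xs" "distinct ys" "set xs \<inter> set ys = {}" using vs(2) vsxy by (metis distinct_append)+
  have wx: "w \<notin> set xs" using dxy ys by (metis disjoint_iff list.set_intros(1))
  have vy: "v \<notin> set ys"
  proof
    assume "v \<in> set ys"
    moreover have "xs \<noteq> []" unfolding xs_def using i by (cases vs) auto
    then have "v \<in> set xs" using lx last_in_set by metis
    ultimately show False using dxy by blast
  qed
  have wxs: "walk E' xs" using walk_E_E' walk_take[OF vs(1)] wx unfolding xs_def by simp
  have wys: "walk E' ys" using walk_E_E' walk_drop[OF vs(1)] vy i unfolding ys_def by simp
  have w1: "walk E' (xs @ tl c)" using walk_glue[OF wxs walk_c] lx by (simp add: chain_def)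
  have tlc: "tl c = [N0..<N0+K] @ [w]" by (simp add: chain_def)
  have w2: "walk E' ((xs @ tl c) @ tl ys)"
    using walk_glue[OF w1 wys] ys tlc by (metis last_appendR last_snoc list.sel(1) not_Cons_self2 append_is_Nil_conv)
  have sxs: "set xs \<subseteq> V" "set ys \<subseteq> V" using vs(3) vsxy by auto
  have "distinct ((xs @ tl c) @ tl ys)"
    using dxy sxs QV wx ys tlc by (auto simp: set_eq_iff)
  moreover have "set ((xs @ tl c) @ tl ys) = set vs \<union> Q"
    using vsxy ys tlc by (auto simp: set_eq_iff)
  moreover have "set ((xs @ tl c) @ tl ys) \<subseteq> V'" using sxs ys tlc vw
    by auto
  ultimately show ?thesis unfolding is_path_def using w2 by blast
qed

lemma path_in: assumes "is_path V E S" "v \<in> S" "w \<in> S" shows "is_path V' E' (S \<union> Q)"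
proof -
  obtain vs where vs: "walk E vs" "distinct vs" "set vs \<subseteq> V" "S = set vs"
    using assms(1) unfolding is_path_def by blast
  obtain i where i: "Suc i < length vs" "(vs ! i = v \<and> vs ! Suc i = w) \<or> (vs ! i = w \<and> vs ! Suc i = v)"
    using tree_edge_in_path[OF T e vs(1,2)] assms vs by blast
  show ?thesis
  proof (cases "vs ! i = v \<and> vs ! Suc i = w")
    case True
    then show ?thesis using path_in_aux[OF vs(1-3) i(1)] vs by simp
  next
    case False
    then have a: "vs ! i = w" "vs ! Suc i = v" using i by auto
    define n where "n = length vs - Suc (Suc i)"
    have r1: "rev vs ! n = v" unfolding n_def using i a by (simp add: rev_nth Suc_diff_Suc)
    have r2: "rev vs ! Suc n = w" unfolding n_def using i a by (simp add: rev_nth Suc_diff_Suc)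
    have "Suc n < length (rev vs)" unfolding n_def using i by simp
    then have "is_path V' E' (set (rev vs) \<union> Q)"
      using path_in_aux[OF walk_rev[OF vs(1)] _ _ _ r1 r2] vs by simp
    then show ?thesis using vs by simp
  qed
qed

lemma path_Q: assumes "l \<le> r" "r < K" shows "is_path V' E' {N0+l..N0+r}"
proof -
  have wk: "walk E' [N0+l..<Suc (N0+r)]"
    unfolding walk_def
  proof (intro conjI allI impI)
    fix j assume j0: "Suc j < length [N0+l..<Suc (N0+r)]"
    then have j: "Suc j < Suc r - l" by (simp del: upt_Suc)
    have lj: "l + j < K" "Suc (l + j) < K" using j assms by auto
    have "{c ! Suc (l + j), c ! Suc (Suc (l + j))} \<in> E'"
      unfolding subE_def chain_edges_def using j assms chain_len[of v w N0 K]
      by (intro UnI2 image_eqI[where x="Suc (l+j)"]) auto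
    moreover have "c ! Suc (l + j) = N0 + l + j" using lj by (simp add: chain_def nth_append)
    moreover have "c ! Suc (Suc (l + j)) = N0 + l + Suc j" using lj by (simp add: chain_def nth_append)
    moreover have "[N0+l..<Suc (N0+r)] ! j = N0 + l + j" "[N0+l..<Suc (N0+r)] ! Suc j = N0 + l + Suc j"
      using j by (simp_all del: upt_Suc)
    ultimately show "{[N0+l..<Suc (N0+r)] ! j, [N0+l..<Suc (N0+r)] ! Suc j} \<in> E'"
      by (simp add: add.assoc)
  qed (use assms in simp)
  show ?thesis unfolding is_path_def using wk assms
    by (intro exI[of _ "[N0+l..<Suc (N0+r)]"]) auto
qed

end


section \<open>Transfer along an injection\<close>

lemma walk_map: assumes "walk E vs" shows "walk ((`) f ` E) (map f vs)"
  unfolding walk_def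
proof (intro conjI allI impI)
  show "map f vs \<noteq> []" using assms by auto
next
  fix i assume i: "Suc i < length (map f vs)"
  have "{map f vs ! i, map f vs ! Suc i} = f ` {vs ! i, vs ! Suc i}" using i by simp
  moreover have "{vs ! i, vs ! Suc i} \<in> E" using assms i by (simp add: walk_def)
  ultimately show "{map f vs ! i, map f vs ! Suc i} \<in> (`) f ` E" by blast
qed

lemma transfer_rep:
  assumes R: "cpt_rep X lt V E W" and inj: "inj_on f V"
  shows "cpt_rep X lt (f ` V) ((`) f ` E) (\<lambda>x. f ` W x)"
proof -
  have T: "tree V E" and P: "\<forall>x\<in>X. is_path V E (W x)" and O: "\<forall>x\<in>X. \<forall>y\<in>X. lt x y \<longleftrightarrow> W x \<subset> W y"
    using R unfolding cpt_rep_def by auto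
  have fin: "finite V" and sg: "simple_graph V E" and cg: "connected_graph V E"
    and cE: "card E = card V - 1" "V \<noteq> {}"
    using T unfolding tree_def by auto
  have EP: "E \<subseteq> Pow V"
  proof
    fix e assume "e \<in> E"
    then obtain u v where "u \<in> V" "v \<in> V" "e = {u, v}" using sg unfolding simple_graph_def by blast
    then show "e \<in> Pow V" by simp
  qed
  have sg': "simple_graph (f ` V) ((`) f ` E)"
    unfolding simple_graph_def
  proof
    fix e' assume "e' \<in> (`) f ` E"
    then obtain e where e: "e \<in> E" "e' = f ` e" by blast
    then obtain u v where uv: "u \<in> V" "v \<in> V" "u \<noteq> v" "e = {u, v}" using sg unfolding simple_graph_def by blast
    then have "f u \<noteq> f v" using inj by (meson inj_on_contraD)
    moreover have "f u \<in> f ` V" "f v \<in> f ` V" using uv by auto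
    moreover have "e' = {f u, f v}" using uv e by simp
    ultimately show "\<exists>a b. a \<in> f ` V \<and> b \<in> f ` V \<and> a \<noteq> b \<and> e' = {a, b}" by blast
  qed
  have cg': "connected_graph (f ` V) ((`) f ` E)"
    unfolding connected_graph_def
  proof (intro ballI)
    fix a b assume "a \<in> f ` V" "b \<in> f ` V"
    then obtain u v where uv: "u \<in> V" "v \<in> V" "a = f u" "b = f v" by blast
    then obtain vs where vs: "walk E vs" "set vs \<subseteq> V" "hd vs = u" "last vs = v"
      using cg unfolding connected_graph_def by blast
    have "vs \<noteq> []" using vs by auto
    then have "hd (map f vs) = a" "last (map f vs) = b" using vs uv by (simp_all add: hd_map last_map)
    moreover have "set (map f vs) \<subseteq> f ` V" using vs by auto
    ultimately show "\<exists>vs. walk ((`) f ` E) vs \<and> set vs \<subseteq> f ` V \<and> hd vs = a \<and> last vs = b"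
      using walk_map[OF vs(1)] by blast
  qed
  have cardV: "card (f ` V) = card V" using card_image[OF inj] .
  have cardE: "card ((`) f ` E) = card E"
    using card_image[OF inj_on_subset[OF inj_on_image_Pow[OF inj] EP]] .
  have T': "tree (f ` V) ((`) f ` E)"
    unfolding tree_def using fin sg' cg' cardV cardE cE by simp
  have P': "is_path (f ` V) ((`) f ` E) (f ` W x)" if xX: "x \<in> X" for x
  proof -
    obtain vs where vs: "walk E vs" "distinct vs" "set vs \<subseteq> V" "W x = set vs"
      using P xX unfolding is_path_def by blast
    have "inj_on f (set vs)" using inj_on_subset[OF inj vs(3)] .
    then have "distinct (map f vs)" using vs(2) by (simp add: distinct_map)
    moreover have "set (map f vs) \<subseteq> f ` V" "f ` W x = set (map f vs)" using vs by auto
    ultimately show ?thesis unfolding is_path_def using walk_map[OF vs(1)] by blast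
  qed
  have WV: "W x \<subseteq> V" if xX: "x \<in> X" for x
  proof -
    obtain vs where vs: "walk E vs" "distinct vs" "set vs \<subseteq> V" "W x = set vs"
      using P xX unfolding is_path_def by blast
    then show ?thesis by simp
  qed
  have O': "lt x y \<longleftrightarrow> f ` W x \<subset> f ` W y" if xy: "x \<in> X" "y \<in> X" for x y
  proof -
    have wx: "W x \<subseteq> V" and wy: "W y \<subseteq> V" using WV xy by auto
    have s1: "f ` W x \<subseteq> f ` W y \<longleftrightarrow> W x \<subseteq> W y"
    proof
      assume fs: "f ` W x \<subseteq> f ` W y"
      show "W x \<subseteq> W y"
      proof
        fix a assume a: "a \<in> W x"
        then have "f a \<in> f ` W y" using fs by blast
        then obtain b where b: "b \<in> W y" "f a = f b" by blast
        have ab: "a \<in> V" "b \<in> V" using a b wx wy by auto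
        have "a = b" using inj_onD[OF inj b(2) ab] .
        then show "a \<in> W y" using b by simp
      qed
    qed (rule image_mono)
    have s2: "f ` W x = f ` W y \<longleftrightarrow> W x = W y"
      using inj_on_image_eq_iff[OF inj wx wy] .
    have "lt x y \<longleftrightarrow> W x \<subset> W y" using O xy by blast
    then show ?thesis using s1 s2 by (simp add: psubset_eq)
  qed
  show ?thesis unfolding cpt_rep_def by (intro conjI ballI T' P' O')
qed


section \<open>Intervals from a CI representation\<close>

lemma ivt_up:
  assumes st: "\<And>k. k < n \<Longrightarrow> g (Suc k) \<le> Suc (g k)"
  shows "a \<le> b \<Longrightarrow> b \<le> n \<Longrightarrow> g a \<le> c \<Longrightarrow> c \<le> g b \<Longrightarrow> \<exists>k. a \<le> k \<and> k \<le> b \<and> g k = (c::nat)"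
proof (induction b)
  case 0 then show ?case by auto
next
  case (Suc b)
  show ?case
  proof (cases "a = Suc b")
    case True then show ?thesis using Suc.prems by auto
  next
    case False
    then have ab: "a \<le> b" using Suc.prems by simp
    show ?thesis
    proof (cases "c \<le> g b")
      case True
      then obtain k where "a \<le> k \<and> k \<le> b \<and> g k = c" using Suc.IH ab Suc.prems by auto
      then show ?thesis by (intro exI[of _ k]) auto
    next
      case False
      then have "c = g (Suc b)" using st[of b] Suc.prems by simp
      then show ?thesis using Suc.prems by auto
    qed
  qed
qed

lemma ivt_down:
  assumes st: "\<And>k. k < n \<Longrightarrow> g k \<le> Suc (g (Suc k))"
  shows "a \<le> b \<Longrightarrow> b \<le> n \<Longrightarrow> g b \<le> c \<Longrightarrow> c \<le> g a \<Longrightarrow> \<exists>k. a \<le> k \<and> k \<le> b \<and> g k = (c::nat)"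
proof (induction b)
  case 0 then show ?case by auto
next
  case (Suc b)
  show ?case
  proof (cases "a = Suc b")
    case True then show ?thesis using Suc.prems by auto
  next
    case False
    then have ab: "a \<le> b" using Suc.prems by simp
    show ?thesis
    proof (cases "g b \<le> c")
      case True
      then obtain k where "a \<le> k \<and> k \<le> b \<and> g k = c" using Suc.IH ab Suc.prems by auto
      then show ?thesis by (intro exI[of _ k]) auto
    next
      case False
      then have "c = g (Suc b)" using st[of b] Suc.prems by simp
      then show ?thesis using Suc.prems by auto
    qed
  qed
qed

definition convex_nat :: "nat set \<Rightarrow> bool" where
  "convex_nat P \<longleftrightarrow> (\<forall>a b c. a \<in> P \<longrightarrow> b \<in> P \<longrightarrow> a \<le> c \<longrightarrow> c \<le> b \<longrightarrow> c \<in> P)"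

lemma step_convex:
  assumes st1: "\<And>k. Suc k < m \<Longrightarrow> g (Suc k) \<le> Suc (g k)"
    and st2: "\<And>k. Suc k < m \<Longrightarrow> g k \<le> Suc (g (Suc k))"
  shows "convex_nat (g ` {..<m})"
  unfolding convex_nat_def
proof (intro allI impI)
  fix a b c assume a: "a \<in> g ` {..<m}" and b: "b \<in> g ` {..<m}" and ac: "a \<le> c" and cb: "c \<le> b"
  obtain ka kb where k: "ka < m" "kb < m" "a = g ka" "b = g kb" using a b by blast
  have km: "ka \<le> m - 1" "kb \<le> m - 1" using k by auto
  have s1: "\<And>k. k < m - 1 \<Longrightarrow> g (Suc k) \<le> Suc (g k)" using st1 by simp
  have s2: "\<And>k. k < m - 1 \<Longrightarrow> g k \<le> Suc (g (Suc k))" using st2 by simp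
  show "c \<in> g ` {..<m}"
  proof (cases "ka \<le> kb")
    case True
    then obtain k where "ka \<le> k" "k \<le> kb" "g k = c"
      using ivt_up[of "m - 1" g ka kb c, OF s1] km k ac cb by auto
    then show ?thesis using k by force
  next
    case False
    then obtain k where "kb \<le> k" "k \<le> ka" "g k = c"
      using ivt_down[of "m - 1" g kb ka c, OF s2] km k ac cb False by auto
    then show ?thesis using k by force
  qed
qed

lemma path_host_edges:
  assumes T: "tree V E" and hs: "walk E hs" "distinct hs" "V = set hs"
  shows "E = chain_edges hs"
proof -
  have fin: "finite V" and sg: "simple_graph V E" and cE: "card E = card V - 1"
    using T unfolding tree_def by auto
  have sub: "chain_edges hs \<subseteq> E"
    unfolding chain_edges_def using walk_edge[OF hs(1)] by auto
  have "card (chain_edges hs) = card E"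
    using card_chain_edges[OF hs(2)] cE hs(3) distinct_card[OF hs(2)] by simp
  then show ?thesis using card_subset_eq[OF simple_finite_E[OF sg fin] sub] by simp
qed

lemma CI_intervals:
  assumes "CI M lt"
  shows "\<exists>n (P :: 'a \<Rightarrow> nat set). (\<forall>x\<in>M. P x \<noteq> {} \<and> P x \<subseteq> {..<n} \<and> convex_nat (P x)) \<and>
            (\<forall>x\<in>M. \<forall>y\<in>M. lt x y \<longleftrightarrow> P x \<subset> P y)"
proof -
  obtain VM :: "nat set" and EM WM where R: "cpt_rep M lt VM EM WM" and hp: "is_path VM EM VM"
    using assms unfolding CI_def by blast
  obtain hs where hs: "walk EM hs" "distinct hs" "set hs \<subseteq> VM" "VM = set hs"
    using hp unfolding is_path_def by blast
  have T: "tree VM EM" and PM: "\<forall>x\<in>M. is_path VM EM (WM x)"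
    and OM: "\<forall>x\<in>M. \<forall>y\<in>M. lt x y \<longleftrightarrow> WM x \<subset> WM y"
    using R unfolding cpt_rep_def by auto
  have EMc: "EM = chain_edges hs" using path_host_edges[OF T hs(1,2,4)] .
  define n where "n = length hs"
  define P where "P x = {i. i < n \<and> hs ! i \<in> WM x}" for x
  have WVM: "WM x \<subseteq> set hs" if xM: "x \<in> M" for x
  proof -
    obtain ws where "walk EM ws" "distinct ws" "set ws \<subseteq> VM" "WM x = set ws"
      using PM xM unfolding is_path_def by blast
    then show ?thesis using hs(4) by simp
  qed
  have props: "P x \<noteq> {} \<and> P x \<subseteq> {..<n} \<and> convex_nat (P x)" if xM: "x \<in> M" for x
  proof -
    obtain ws where ws: "walk EM ws" "distinct ws" "set ws \<subseteq> VM" "WM x = set ws"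
      using PM xM unfolding is_path_def by blast
    define g where "g k = (SOME i. i < n \<and> hs ! i = ws ! k)" for k
    have gk: "g k < n \<and> hs ! g k = ws ! k" if k: "k < length ws" for k
    proof -
      have "ws ! k \<in> set hs" using ws(3) hs(4) k by auto
      then have "\<exists>i. i < n \<and> hs ! i = ws ! k" unfolding n_def by (auto simp: in_set_conv_nth)
      then show ?thesis unfolding g_def by (rule someI_ex)
    qed
    have Pg: "P x = g ` {..<length ws}"
    proof
      show "P x \<subseteq> g ` {..<length ws}"
      proof
        fix i assume "i \<in> P x"
        then have i: "i < n" "hs ! i \<in> set ws" unfolding P_def using ws by auto
        then obtain k where k: "k < length ws" "ws ! k = hs ! i" by (auto simp: in_set_conv_nth)
        then have "hs ! g k = hs ! i" "g k < n" using gk by auto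
        then have "g k = i" using hs(2) i unfolding n_def by (simp add: nth_eq_iff_index_eq)
        then show "i \<in> g ` {..<length ws}" using k by force
      qed
    next
      show "g ` {..<length ws} \<subseteq> P x"
        unfolding P_def using gk ws(4) by auto
    qed
    have step: "(g (Suc k) = Suc (g k)) \<or> (g k = Suc (g (Suc k)))" if k: "Suc k < length ws" for k
    proof -
      have "{ws ! k, ws ! Suc k} \<in> chain_edges hs" using walk_edge[OF ws(1) k] EMc by simp
      then obtain i where i: "i < length hs - 1" "{ws ! k, ws ! Suc k} = {hs ! i, hs ! Suc i}"
        unfolding chain_edges_def by blast
      have g1: "g k < n" "hs ! g k = ws ! k" "g (Suc k) < n" "hs ! g (Suc k) = ws ! Suc k"
        using gk[of k] gk[of "Suc k"] k by auto
      have "(hs ! g k = hs ! i \<and> hs ! g (Suc k) = hs ! Suc i) \<or> (hs ! g k = hs ! Suc i \<and> hs ! g (Suc k) = hs ! i)"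
        using i(2) g1 by (auto simp: doubleton_eq_iff)
      then have "(g k = i \<and> g (Suc k) = Suc i) \<or> (g k = Suc i \<and> g (Suc k) = i)"
        using hs(2) g1 i(1) unfolding n_def by (auto simp: nth_eq_iff_index_eq)
      then show ?thesis by auto
    qed
    have cv: "convex_nat (P x)" unfolding Pg
      by (rule step_convex) (use step in fastforce)+
    have "ws \<noteq> []" using ws(1) by auto
    then have "P x \<noteq> {}" unfolding Pg by auto
    moreover have "P x \<subseteq> {..<n}" unfolding P_def by auto
    ultimately show ?thesis using cv by blast
  qed
  have sub: "WM x \<subseteq> WM y \<longleftrightarrow> P x \<subseteq> P y" if xy: "x \<in> M" "y \<in> M" for x y
  proof
    assume "WM x \<subseteq> WM y" then show "P x \<subseteq> P y" unfolding P_def by auto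
  next
    assume Pxy: "P x \<subseteq> P y"
    show "WM x \<subseteq> WM y"
    proof
      fix a assume a: "a \<in> WM x"
      then have "a \<in> set hs" using WVM xy by auto
      then obtain i where i: "i < n" "hs ! i = a" unfolding n_def by (auto simp: in_set_conv_nth)
      then have "i \<in> P x" unfolding P_def using a by simp
      then have "i \<in> P y" using Pxy by blast
      then show "a \<in> WM y" unfolding P_def using i by simp
    qed
  qed
  have ord: "lt x y \<longleftrightarrow> P x \<subset> P y" if xy: "x \<in> M" "y \<in> M" for x y
  proof -
    have "lt x y \<longleftrightarrow> WM x \<subset> WM y" using OM xy by blast
    then show ?thesis using sub[OF xy] sub[OF xy(2) xy(1)] by (auto simp: psubset_eq)
  qed
  show ?thesis
    by (rule exI[of _ n], rule exI[of _ P]) (use props ord in blast)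
qed


lemma strong_above:
  assumes transA: "\<forall>x\<in>X. \<forall>y\<in>X. \<forall>z\<in>X. lt x y \<longrightarrow> lt y z \<longrightarrow> lt x z"
    and asymA: "\<forall>x\<in>X. \<forall>y\<in>X. lt x y \<longrightarrow> \<not> lt y x"
    and sm: "strong_module X lt M" and zM: "z \<in> M" and u: "u \<in> X" "u \<notin> M"
    and ucomp: "\<forall>m\<in>M. comparable lt u m" and zu: "lt z u"
  shows "\<forall>m\<in>M. lt m u"
proof (rule ccontr)
  have trans: "\<And>x y z. x \<in> X \<Longrightarrow> y \<in> X \<Longrightarrow> z \<in> X \<Longrightarrow> lt x y \<Longrightarrow> lt y z \<Longrightarrow> lt x z"
    using transA by blast
  have asym: "\<And>x y. x \<in> X \<Longrightarrow> y \<in> X \<Longrightarrow> lt x y \<Longrightarrow> \<not> lt y x"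
    using asymA by blast
  assume "\<not> (\<forall>m\<in>M. lt m u)"
  then obtain b0 where b0: "b0 \<in> M" "\<not> lt b0 u" by blast
  have mod: "module X lt M" using sm unfolding strong_module_def by blast
  have MX: "M \<subseteq> X" using mod unfolding module_def by blast
  define D where "D = {m \<in> M. lt m u}"
  define Up where "Up = {m \<in> M. lt u m}"
  have ub0: "lt u b0" using ucomp b0 unfolding comparable_def by blast
  have part: "m \<in> D \<or> m \<in> Up" if "m \<in> M" for m
    using ucomp that unfolding comparable_def D_def Up_def by blast
  have DUp: "lt d b" if "d \<in> D" "b \<in> Up" for d b
    using that trans[of d u b] MX u unfolding D_def Up_def by blast
  define S where "S = D \<union> {x \<in> X - M. (\<forall>d\<in>D. lt d x) \<and> (\<forall>b\<in>Up. lt x b)}"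
  have zD: "z \<in> D" unfolding D_def using zM zu by blast
  have b0Up: "b0 \<in> Up" unfolding Up_def using b0 ub0 by blast
  have uS: "u \<in> S" unfolding S_def D_def Up_def using u by blast
  have b0S: "b0 \<notin> S" unfolding S_def D_def using b0 by blast
  have SX: "S \<subseteq> X" unfolding S_def D_def using MX by blast
  have modS: "module X lt S"
    unfolding module_def
  proof (intro conjI ballI SX)
    fix t assume t: "t \<in> X - S"
    show "(\<forall>s\<in>S. comparable lt t s) \<or> (\<forall>s\<in>S. \<not> comparable lt t s)"
    proof (cases "t \<in> M")
      case True
      then have tUp: "t \<in> Up" using part t unfolding S_def by blast
      have "lt s t" if sS: "s \<in> S" for s
      proof (cases "s \<in> D")
        case True
        then have "lt s u" "s \<in> X" unfolding D_def using MX by auto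
        moreover have "lt u t" using tUp unfolding Up_def by blast
        ultimately show ?thesis using trans[of s u t] u t by blast
      next
        case False
        then have "\<forall>b\<in>Up. lt s b" using sS unfolding S_def by blast
        then show ?thesis using tUp by blast
      qed
      then show ?thesis unfolding comparable_def by blast
    next
      case tM: False
      have "(\<forall>m\<in>M. comparable lt t m) \<or> (\<forall>m\<in>M. \<not> comparable lt t m)"
        using mod t tM unfolding module_def by blast
      then show ?thesis
      proof
        assume tc: "\<forall>m\<in>M. comparable lt t m"
        show ?thesis
        proof (cases "\<exists>b\<in>Up. lt b t")
          case True
          then obtain b where b: "b \<in> Up" "lt b t" by blast
          have bX: "b \<in> X" "t \<in> X" using b MX t unfolding Up_def by auto
          have "lt s t" if sS: "s \<in> S" for s
          proof (cases "s \<in> D")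
            case True
            then have "lt s b" using DUp b by blast
            moreover have "s \<in> X" using True MX unfolding D_def by blast
            ultimately show ?thesis using trans[OF _ bX(1) bX(2) _ b(2)] by blast
          next
            case False
            then have "s \<in> X" "\<forall>b\<in>Up. lt s b" using sS unfolding S_def by blast+
            then show ?thesis using trans[OF _ bX(1) bX(2) _ b(2)] b(1) by blast
          qed
          then show ?thesis unfolding comparable_def by blast
        next
          case False
          then have tb: "\<forall>b\<in>Up. lt t b" using tc unfolding comparable_def Up_def by blast
          show ?thesis
          proof (cases "\<exists>d\<in>D. lt t d")
            case True
            then obtain d where d: "d \<in> D" "lt t d" by blast
            have "comparable lt t s" if sS: "s \<in> S" for s
            proof (cases "s \<in> D")
              case True
              then show ?thesis using tc unfolding D_def by blast
            next
              case False
              then have "lt d s" "s \<in> X" using sS d unfolding S_def by auto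
              moreover have "d \<in> X" using d MX unfolding D_def by blast
              ultimately have "lt t s" using trans[of t d s] d t by blast
              then show ?thesis unfolding comparable_def by blast
            qed
            then show ?thesis by blast
          next
            case False
            then have "\<forall>d\<in>D. lt d t" using tc unfolding comparable_def D_def by blast
            then have "t \<in> S" using tb t tM unfolding S_def by blast
            then show ?thesis using t by blast
          qed
        qed
      next
        assume tn: "\<forall>m\<in>M. \<not> comparable lt t m"
        have "\<not> comparable lt t s" if sS: "s \<in> S" for s
        proof (cases "s \<in> D")
          case True
          then show ?thesis using tn unfolding D_def by blast
        next
          case False
          then have s: "s \<in> X" "\<forall>d\<in>D. lt d s" "\<forall>b\<in>Up. lt s b" using sS unfolding S_def by auto
          show ?thesis
          proof
            assume "comparable lt t s"
            then consider "lt t s" | "lt s t" unfolding comparable_def by blast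
            then show False
            proof cases
              case 1
              then have "lt t b0" using trans[of t s b0] s b0Up b0 MX t by blast
              then show False using tn b0 unfolding comparable_def by blast
            next
              case 2
              then have "lt z t" using trans[of z s t] s zD zM MX t by blast
              then show False using tn zM unfolding comparable_def by blast
            qed
          qed
        qed
        then show ?thesis by blast
      qed
    qed
  qed
  have "M \<inter> S = {} \<or> M \<subseteq> S \<or> S \<subseteq> M" using sm modS unfolding strong_module_def by blast
  moreover have "z \<in> M \<inter> S" using zD zM unfolding S_def by blast
  ultimately show False using uS u b0S b0 by blast
qed

lemma convex_double: "convex_nat P \<Longrightarrow> convex_nat {j. j div 2 \<in> P}"
  unfolding convex_nat_def
proof (intro allI impI)
  fix a b c assume cv: "\<forall>a b c. a \<in> P \<longrightarrow> b \<in> P \<longrightarrow> a \<le> c \<longrightarrow> c \<le> b \<longrightarrow> c \<in> P"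
    and h: "a \<in> {j. j div 2 \<in> P}" "b \<in> {j. j div 2 \<in> P}" "a \<le> c" "c \<le> b"
  have "a div 2 \<le> c div 2" "c div 2 \<le> b div 2" using h by (auto intro: div_le_mono)
  then have "c div 2 \<in> P" using cv[rule_format, of "a div 2" "b div 2" "c div 2"] h by simp
  then show "c \<in> {j. j div 2 \<in> P}" by simp
qed

lemma convex_interval:
  assumes "convex_nat D" "finite D" "D \<noteq> {}"
  shows "D = {Min D..Max D}"
proof
  show "D \<subseteq> {Min D..Max D}" using assms(2) by (auto intro: Min_le Max_ge)
next
  show "{Min D..Max D} \<subseteq> D"
  proof
    fix c assume "c \<in> {Min D..Max D}"
    moreover have "Min D \<in> D" "Max D \<in> D" using assms(2,3) by simp_all
    ultimately show "c \<in> D" using assms(1) unfolding convex_nat_def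
      by (metis atLeastAtMost_iff)
  qed
qed


definition phi :: "nat \<Rightarrow> nat \<Rightarrow> nat set \<Rightarrow> nat set \<Rightarrow> nat set" where
  "phi v w Q S = (if v \<in> S \<and> w \<in> S then S \<union> Q else S)"

lemma phi_inter: "S \<subseteq> V \<Longrightarrow> Q \<inter> V = {} \<Longrightarrow> phi v w Q S \<inter> V = S"
  unfolding phi_def by auto

lemma phi_mono: "S \<subseteq> T \<Longrightarrow> phi v w Q S \<subseteq> phi v w Q T"
  unfolding phi_def by auto

lemma phi_order:
  assumes "S \<subseteq> V" "T \<subseteq> V" "Q \<inter> V = {}"
  shows "phi v w Q S \<subset> phi v w Q T \<longleftrightarrow> S \<subset> T"
proof
  assume a: "phi v w Q S \<subset> phi v w Q T"
  have "S \<subseteq> T" using a phi_inter[OF assms(1,3)] phi_inter[OF assms(2,3)] by blast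
  moreover have "S \<noteq> T" using a by blast
  ultimately show "S \<subset> T" by blast
next
  assume a: "S \<subset> T"
  then have "phi v w Q S \<subseteq> phi v w Q T" using phi_mono by blast
  moreover have "phi v w Q S \<noteq> phi v w Q T"
    using a phi_inter[OF assms(1,3), of v w] phi_inter[OF assms(2,3), of v w] by auto
  ultimately show "phi v w Q S \<subset> phi v w Q T" by blast
qed

lemma double_sub: "{j::nat. j div 2 \<in> P} \<subseteq> {j. j div 2 \<in> P'} \<longleftrightarrow> P \<subseteq> P'"
proof
  assume a: "{j. j div 2 \<in> P} \<subseteq> {j. j div 2 \<in> P'}"
  show "P \<subseteq> P'"
  proof
    fix i assume "i \<in> P"
    then have "2 * i \<in> {j. j div 2 \<in> P}" by simp
    then have "2 * i \<in> {j. j div 2 \<in> P'}" using a by blast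
    then show "i \<in> P'" by simp
  qed
qed auto

lemma shift_sub: "(\<lambda>j. (N0::nat) + j) ` A \<subseteq> (\<lambda>j. N0 + j) ` B \<longleftrightarrow> A \<subseteq> B"
  by (rule inj_image_subset_iff) (simp add: inj_def)

lemma psub_via: "(\<And>A B. f A \<subseteq> f B \<longleftrightarrow> g A \<subseteq> g B) \<Longrightarrow> f A \<subset> f B \<longleftrightarrow> g A \<subset> g B"
  by (metis psubset_eq subset_antisym order_refl)

theorem mainTheorem5:
  fixes X :: "'a set" and lt :: "'a \<Rightarrow> 'a \<Rightarrow> bool" and M :: "'a set"
    and V :: "'v set" and E :: "'v set set" and W :: "'a \<Rightarrow> 'v set" and z :: 'a
  assumes "finite_poset X lt"
    and "dually_CPT X lt"
    and "clique_module X lt M"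
    and "CI M lt"
    and "cpt_rep X lt V E W"
    and "z \<in> M"
    and "trivial_path (W z)"
  shows "\<exists>(V'::nat set) E' W'. cpt_rep X lt V' E' W' \<and> \<not> trivial_path (W' z)"
proof -
  note R = assms(5)
  have finV: "finite V" using R unfolding cpt_rep_def tree_def by blast
  obtain h where "bij_betw h V {0..<card V}" using ex_bij_betw_finite_nat[OF finV] by blast
  then have inj: "inj_on h V" by (rule bij_betw_imp_inj_on)
  define V0 where "V0 = h ` V"
  define E0 where "E0 = (`) h ` E"
  define W0 where "W0 x = h ` W x" for x
  have R0: "cpt_rep X lt V0 E0 W0"
    unfolding V0_def E0_def W0_def using transfer_rep[OF R inj] .
  have T0: "tree V0 E0" and P0: "\<And>x. x \<in> X \<Longrightarrow> is_path V0 E0 (W0 x)"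
    and O0: "\<And>x y. x \<in> X \<Longrightarrow> y \<in> X \<Longrightarrow> lt x y \<longleftrightarrow> W0 x \<subset> W0 y"
    using R0 unfolding cpt_rep_def by auto
  have finV0: "finite V0" and V0ne: "V0 \<noteq> {}" using T0 unfolding tree_def by auto
  have WV0: "W0 x \<subseteq> V0" "W0 x \<noteq> {}" if xX: "x \<in> X" for x
  proof -
    obtain vs where vs: "walk E0 vs" "distinct vs" "set vs \<subseteq> V0" "W0 x = set vs"
      using P0[OF xX] unfolding is_path_def by blast
    then show "W0 x \<subseteq> V0" "W0 x \<noteq> {}" by auto
  qed
  have trans: "\<And>x y u. x \<in> X \<Longrightarrow> y \<in> X \<Longrightarrow> u \<in> X \<Longrightarrow> lt x y \<Longrightarrow> lt y u \<Longrightarrow> lt x u"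
  proof -
    fix x y u assume "x \<in> X" "y \<in> X" "u \<in> X" "lt x y" "lt y u"
    then show "lt x u" using O0[of x y] O0[of y u] O0[of x u] by auto
  qed
  have asym: "\<And>x y. x \<in> X \<Longrightarrow> y \<in> X \<Longrightarrow> lt x y \<Longrightarrow> \<not> lt y x"
  proof -
    fix x y assume "x \<in> X" "y \<in> X" "lt x y"
    then show "\<not> lt y x" using O0[of x y] O0[of y x] by auto
  qed
  have cm: "strong_module X lt M" and AB: "\<exists>A B. A \<noteq> {} \<and> B \<noteq> {} \<and> A \<union> B = M \<and> A \<inter> B = {} \<and>
        (\<forall>a\<in>A. \<forall>b\<in>B. comparable lt a b)"
    using assms(3) unfolding clique_module_def by auto
  have modM: "module X lt M" using cm unfolding strong_module_def by blast
  have MX: "M \<subseteq> X" using modM unfolding module_def by blast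
  have zX: "z \<in> X" using assms(6) MX by blast
  obtain v0 where v0: "W z = {v0}" using assms(7) unfolding trivial_path_def by blast
  define v where "v = h v0"
  have Wz: "W0 z = {v}" unfolding W0_def v_def using v0 by simp
  have zmin: "\<not> lt x z" if xX: "x \<in> X" for x
  proof
    assume "lt x z"
    then have "W0 x \<subset> {v}" using O0[OF xX zX] Wz by simp
    then have "W0 x = {}" by (metis subset_singletonD psubset_eq)
    then show False using WV0[OF xX] by simp
  qed
  have zlt: "lt z y" if "y \<in> X" "comparable lt z y" for y
    using that zmin unfolding comparable_def by blast
  obtain b where b: "b \<in> M" "lt z b"
  proof -
    obtain A B where A: "A \<noteq> {}" "B \<noteq> {}" "A \<union> B = M" "A \<inter> B = {}"
      and c: "\<forall>a\<in>A. \<forall>b\<in>B. comparable lt a b" using AB by blast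
    show thesis
    proof (cases "z \<in> A")
      case True
      obtain b where "b \<in> B" using A by blast
      then have "comparable lt z b" "b \<in> M" using c True A by auto
      then show thesis using that zlt MX by blast
    next
      case False
      then have zB: "z \<in> B" using A assms(6) by blast
      obtain a where "a \<in> A" using A by blast
      then have "comparable lt a z" "a \<in> M" using c zB A by auto
      then have "comparable lt z a" unfolding comparable_def by blast
      then show thesis using that zlt MX \<open>a \<in> M\<close> by blast
    qed
  qed
  have bX: "b \<in> X" using b MX by blast
  have zb: "{v} \<subset> W0 b" using O0[OF zX bX] b Wz by simp
  obtain w where w: "{v, w} \<in> E0" "w \<in> W0 b"
  proof -
    obtain bs where bs: "walk E0 bs" "distinct bs" "set bs \<subseteq> V0" "W0 b = set bs"
      using P0[OF bX] unfolding is_path_def by blast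
    have "v \<in> set bs" using zb bs by auto
    then obtain i where i: "i < length bs" "bs ! i = v" by (auto simp: in_set_conv_nth)
    obtain u where u: "u \<in> set bs" "u \<noteq> v" using zb bs by blast
    have len: "length bs \<ge> 2"
    proof (rule ccontr)
      assume "\<not> length bs \<ge> 2"
      then have "length bs \<le> 1" by simp
      then have "set bs \<subseteq> {bs ! 0}" by (cases bs) auto
      then show False using u \<open>v \<in> set bs\<close> by blast
    qed
    show thesis
    proof (cases "Suc i < length bs")
      case True
      then have "{v, bs ! Suc i} \<in> E0" using walk_edge[OF bs(1) True] i by simp
      moreover have "bs ! Suc i \<in> W0 b" using True bs by simp
      ultimately show thesis using that by blast
    next
      case False
      then have i0: "i = Suc (i - 1)" using len i by simp
      have "{bs ! (i - 1), bs ! Suc (i - 1)} \<in> E0" using walk_edge[OF bs(1), of "i - 1"] i0 i by simp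
      then have "{v, bs ! (i - 1)} \<in> E0" using i0 i by (metis insert_commute)
      moreover have "bs ! (i - 1) \<in> W0 b" using i bs by simp
      ultimately show thesis using that by blast
    qed
  qed
  have vw0: "v \<in> V0" "w \<in> V0" "v \<noteq> w" using simple_edge[of V0 E0 v w] w T0 unfolding tree_def by auto
  obtain n and P :: "'a \<Rightarrow> nat set" where
    H: "(\<forall>x\<in>M. P x \<noteq> {} \<and> P x \<subseteq> {..<n} \<and> convex_nat (P x)) \<and>
            (\<forall>x\<in>M. \<forall>y\<in>M. lt x y \<longleftrightarrow> P x \<subset> P y)"
    using CI_intervals[OF assms(4)] by (elim exE) (erule that)
  have Pp: "P x \<noteq> {} \<and> P x \<subseteq> {..<n} \<and> convex_nat (P x)" if "x \<in> M" for x
    using H that by simp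
  have Po: "lt x y \<longleftrightarrow> P x \<subset> P y" if "x \<in> M" "y \<in> M" for x y
    using H that by simp
  define K where "K = 2 * n"
  define N0 where "N0 = Suc (Max V0)"
  have N0: "\<And>x. x \<in> V0 \<Longrightarrow> x < N0" unfolding N0_def using finV0 by (simp add: le_imp_less_Suc)
  have n1: "n \<ge> 1"
  proof -
    obtain i where "i \<in> P z" using Pp[OF assms(6)] by blast
    then have "i < n" using Pp[OF assms(6)] by blast
    then show ?thesis by simp
  qed
  have K1: "K \<ge> 1" unfolding K_def using n1 by simp
  interpret S: subdiv V0 E0 v w N0 K
    using T0 w(1) N0 K1 by unfold_locales auto
  define Q where "Q = {N0..<N0+K}"
  have QV: "Q \<inter> V0 = {}" unfolding Q_def using N0 by fastforce
  define D where "D x = {j. j div 2 \<in> P x}" for x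
  define W' where "W' x = (if x \<in> M then (\<lambda>j. N0 + j) ` D x else phi v w Q (W0 x))" for x
  have D_props: "D x \<noteq> {} \<and> D x \<subseteq> {..<K} \<and> convex_nat (D x)" if xM: "x \<in> M" for x
  proof -
    have p: "P x \<noteq> {}" "P x \<subseteq> {..<n}" "convex_nat (P x)" using Pp[OF xM] by auto
    obtain i where "i \<in> P x" using p by blast
    then have "2 * i \<in> D x" unfolding D_def by simp
    moreover have "D x \<subseteq> {..<K}"
    proof
      fix j assume "j \<in> D x"
      then have "j div 2 < n" using p unfolding D_def by auto
      then show "j \<in> {..<K}" unfolding K_def by simp
    qed
    moreover have "convex_nat (D x)" unfolding D_def using convex_double[OF p(3)] .
    ultimately show ?thesis by blast
  qed
  have WM_Q: "W' x \<subseteq> Q" "W' x \<noteq> {}" if xM: "x \<in> M" for x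
    using D_props[OF xM] xM unfolding W'_def Q_def by auto
  have path': "is_path (V0 \<union> S.Q) (subE E0 v w N0 K) (W' x)" if xX: "x \<in> X" for x
  proof (cases "x \<in> M")
    case True
    have dp: "D x \<noteq> {}" "D x \<subseteq> {..<K}" "convex_nat (D x)" using D_props[OF True] by auto
    have fD: "finite (D x)" using dp(2) finite_subset by blast
    have Dint: "D x = {Min (D x)..Max (D x)}" using convex_interval[OF dp(3) fD dp(1)] .
    have lr: "Min (D x) \<le> Max (D x)" "Max (D x) < K" using fD dp by auto
    obtain l r where lr2: "l = Min (D x)" "r = Max (D x)" by blast
    have "W' x = (\<lambda>j. N0 + j) ` {l..r}"
      unfolding W'_def using True Dint lr2 by simp
    also have "\<dots> = {N0 + l..N0 + r}" by (simp add: add.commute)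
    finally have "W' x = {N0 + l..N0 + r}" .
    then show ?thesis using S.path_Q[OF lr[folded lr2]] by simp
  next
    case False
    show ?thesis
    proof (cases "v \<in> W0 x \<and> w \<in> W0 x")
      case True
      then have "W' x = W0 x \<union> S.Q" unfolding W'_def phi_def Q_def using False by simp
      then show ?thesis using S.path_in[OF P0[OF xX]] True by simp
    next
      case nvw: False
      then have "W' x = W0 x" unfolding W'_def phi_def using False by auto
      then show ?thesis using S.path_out[OF P0[OF xX]] nvw by simp
    qed
  qed
  have above: "\<forall>m\<in>M. lt m y" if y: "y \<in> X" "y \<notin> M" "\<forall>m\<in>M. comparable lt y m" for y
  proof -
    have "comparable lt z y" using y assms(6) unfolding comparable_def by blast
    then have "lt z y" using zlt y by blast
    have tA: "\<forall>x\<in>X. \<forall>y\<in>X. \<forall>z\<in>X. lt x y \<longrightarrow> lt y z \<longrightarrow> lt x z" using trans by blast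
    have aA: "\<forall>x\<in>X. \<forall>y\<in>X. lt x y \<longrightarrow> \<not> lt y x" using asym by blast
    show ?thesis using strong_above[OF tA aA cm assms(6) y(1,2) y(3) \<open>lt z y\<close>] .
  qed
  have none_no_vw: "\<not> (v \<in> W0 y \<and> w \<in> W0 y)" if y: "y \<in> X" "\<forall>m\<in>M. \<not> comparable lt y m" for y
  proof
    assume a: "v \<in> W0 y \<and> w \<in> W0 y"
    then have "{v} \<subset> W0 y" using vw0(3) by auto
    then have "lt z y" using O0[OF zX y(1)] Wz by simp
    then show False using y assms(6) unfolding comparable_def by blast
  qed
  have ord': "lt x y \<longleftrightarrow> W' x \<subset> W' y" if xy: "x \<in> X" "y \<in> X" for x y
  proof (cases "x \<in> M")
    case xM: True
    show ?thesis
    proof (cases "y \<in> M")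
      case yM: True
      have "lt x y \<longleftrightarrow> P x \<subset> P y" using Po[OF xM yM] .
      also have "\<dots> \<longleftrightarrow> D x \<subset> D y" unfolding D_def by (rule psub_via[symmetric]) (rule double_sub)
      also have "\<dots> \<longleftrightarrow> (\<lambda>j. N0 + j) ` D x \<subset> (\<lambda>j. N0 + j) ` D y" by (rule psub_via[symmetric]) (rule shift_sub)
      finally show ?thesis unfolding W'_def using xM yM by simp
    next
      case yM: False
      have "(\<forall>m\<in>M. comparable lt y m) \<or> (\<forall>m\<in>M. \<not> comparable lt y m)"
        using modM xy(2) yM unfolding module_def by blast
      then show ?thesis
      proof
        assume yc: "\<forall>m\<in>M. comparable lt y m"
        have "lt x y" using above[OF xy(2) yM yc] xM by blast
        moreover have "lt b y" using above[OF xy(2) yM yc] b by blast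
        then have "W0 b \<subset> W0 y" using O0[OF bX xy(2)] by simp
        then have "v \<in> W0 y \<and> w \<in> W0 y" using w zb by blast
        then have "W' y = W0 y \<union> Q" unfolding W'_def phi_def using yM by simp
        moreover have "v \<notin> Q" "v \<in> W0 y" using QV vw0 \<open>v \<in> W0 y \<and> w \<in> W0 y\<close> by auto
        ultimately show ?thesis using WM_Q[OF xM] by blast
      next
        assume yn: "\<forall>m\<in>M. \<not> comparable lt y m"
        have "\<not> lt x y" using yn xM unfolding comparable_def by blast
        moreover have "W' y = W0 y" unfolding W'_def phi_def using yM none_no_vw[OF xy(2) yn] by auto
        moreover have "W0 y \<inter> Q = {}" using WV0[OF xy(2)] QV by blast
        ultimately show ?thesis using WM_Q[OF xM] by blast
      qed
    qed
  next
    case xM: False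
    show ?thesis
    proof (cases "y \<in> M")
      case yM: True
      have nl: "\<not> lt x y"
      proof
        assume l: "lt x y"
        have "(\<forall>m\<in>M. comparable lt x m) \<or> (\<forall>m\<in>M. \<not> comparable lt x m)"
          using modM xy(1) xM unfolding module_def by blast
        then show False
        proof
          assume "\<forall>m\<in>M. comparable lt x m"
          then have "lt y x" using above[OF xy(1) xM] yM by blast
          then show False using asym[OF xy(1) xy(2)] l by blast
        next
          assume "\<forall>m\<in>M. \<not> comparable lt x m"
          then show False using l yM unfolding comparable_def by blast
        qed
      qed
      have "W0 x \<subseteq> W' x" unfolding W'_def phi_def using xM by auto
      moreover obtain a where "a \<in> W0 x" using WV0[OF xy(1)] by blast
      moreover have "a \<in> V0" using \<open>a \<in> W0 x\<close> WV0[OF xy(1)] by blast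
      ultimately have "\<not> W' x \<subseteq> W' y" using WM_Q[OF yM] QV by blast
      then show ?thesis using nl by blast
    next
      case yM: False
      have "lt x y \<longleftrightarrow> W0 x \<subset> W0 y" using O0[OF xy] .
      also have "\<dots> \<longleftrightarrow> phi v w Q (W0 x) \<subset> phi v w Q (W0 y)"
        using phi_order[OF WV0(1)[OF xy(1)] WV0(1)[OF xy(2)] QV] by simp
      finally show ?thesis unfolding W'_def using xM yM by simp
    qed
  qed
  have rep': "cpt_rep X lt (V0 \<union> S.Q) (subE E0 v w N0 K) W'"
    unfolding cpt_rep_def by (intro conjI ballI S.tree' path' ord')
  have nt: "\<not> trivial_path (W' z)"
  proof
    assume "trivial_path (W' z)"
    then obtain q where q: "W' z = {q}" unfolding trivial_path_def by blast
    obtain i where "i \<in> P z" using Pp[OF assms(6)] by blast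
    then have "2 * i \<in> D z" "2 * i + 1 \<in> D z" unfolding D_def by auto
    then have "N0 + 2 * i \<in> W' z" "N0 + (2 * i + 1) \<in> W' z" unfolding W'_def using assms(6) by auto
    then show False using q by auto
  qed
  show ?thesis using rep' nt by blast
qed

end
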